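(* Let $\ell>1$, $m_c\ge0$ with $4m_c^2\ge(3\ell-1)^2$, and $M=\frac{\sqrt{4m_c^2-(1-3\ell)^2}}{2(\ell-1)}$. Then there is a constant $C$ such that for all $z\in[1,\infty)$ $$\int_0^{z-1}\Big|\big((1+z)^2-y^2\big)^{-1/2}F\Big(\tfrac12+iM,\tfrac12+iM;1;\tfrac{(z-1)^2-y^2}{(z+1)^2-y^2}\Big)\Big|\,dy\le C(1+\ln z)^{1-\operatorname{sgn}M}.$$
   Context: $F(a,b;c;\zeta)$ is Gauss's hypergeometric function; $\operatorname{sgn}M=1$ if $M>0$, $0$ if $M=0$. *)

theory Defs
  imports "HOL-Analysis.Analysis"
begin

text \<open>Gauss hypergeometric function F(a,b;c;z), defined by its power series
  (used only for |z| < 1, where the series converges).\<close>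
definition hyp2F1 :: "complex \<Rightarrow> complex \<Rightarrow> complex \<Rightarrow> complex \<Rightarrow> complex" where
  "hyp2F1 a b c z =
     (\<Sum>n. pochhammer a n * pochhammer b n / (pochhammer c n * of_nat (fact n)) * z ^ n)"

end

theory Submission imports Defs begin

lemma poch_bound:
  fixes a :: complex
  assumes "Re a = 1/2"
  shows "\<exists>K>0. \<forall>n. norm (pochhammer a n / fact n) ^ 2 \<le> K / (real n + 1)"
proof -
  have "Bseq (rGamma_series a)" using rGamma_series_LIMSEQ[of a] by (rule convergent_imp_Bseq[OF convergentI])
  then obtain R where R: "R > 0" "\<And>n. norm (rGamma_series a n) \<le> R" by (auto simp: Bseq_def)
  have b: "norm (pochhammer a n / fact n) ^ 2 \<le> 2 * R^2 / (real n + 1)" if "n \<ge> 1" for n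
  proof -
    have "norm (exp (a * of_real (ln (real n)))) = exp (ln (real n) / 2)"
      using assms by (simp add: norm_exp_eq_Re)
    also have "\<dots> = real n powr (1/2)" using that by (simp add: powr_def)
    also have "\<dots> = sqrt (real n)" by (simp add: powr_half_sqrt)
    finally have e: "norm (exp (a * of_real (ln (real n)))) = sqrt (real n)" .
    have an: "norm (a + of_nat n) \<ge> real n + 1/2"
      using complex_Re_le_cmod[of "a + of_nat n"] assms by simp
    have "norm (rGamma_series a n) = norm (pochhammer a n / fact n) * norm (a + of_nat n) / sqrt (real n)"
      unfolding rGamma_series_def using e by (simp add: pochhammer_rec' norm_mult norm_divide)
    hence "norm (pochhammer a n / fact n) * norm (a + of_nat n) / sqrt (real n) \<le> R" using R(2)[of n] by metis
    hence d: "norm (pochhammer a n / fact n) * norm (a + of_nat n) \<le> R * sqrt (real n)"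
      using that by (simp add: pos_divide_le_eq)
    have "norm (pochhammer a n / fact n) * (real n + 1/2) \<le> norm (pochhammer a n / fact n) * norm (a + of_nat n)"
      by (rule mult_left_mono) (simp_all add: an)
    also note d
    finally have "norm (pochhammer a n / fact n) * (real n + 1/2) \<le> R * sqrt (real n)" .
    hence "(norm (pochhammer a n / fact n) * (real n + 1/2))^2 \<le> (R * sqrt (real n))^2"
      by (rule power_mono) simp
    hence i1: "norm (pochhammer a n / fact n)^2 * (real n + 1/2)^2 \<le> R^2 * real n"
      by (simp add: power_mult_distrib)
    have i2: "R^2 * real n * (real n + 1) \<le> 2 * R^2 * (real n + 1/2)^2"
      using R by (simp add: power2_eq_square algebra_simps)
    have "norm (pochhammer a n / fact n)^2 * (real n + 1) * (real n + 1/2)^2 = 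
       (norm (pochhammer a n / fact n)^2 * (real n + 1/2)^2) * (real n + 1)" by simp
    also have "\<dots> \<le> R^2 * real n * (real n + 1)" by (rule mult_right_mono[OF i1]) simp
    also note i2
    finally have "norm (pochhammer a n / fact n)^2 * (real n + 1) * (real n + 1/2)^2 \<le> 2 * R^2 * (real n + 1/2)^2" .
    hence "norm (pochhammer a n / fact n)^2 * (real n + 1) \<le> 2 * R^2"
      by (rule mult_right_le_imp_le) simp
    thus ?thesis by (simp add: field_simps)
  qed
  show ?thesis
  proof (intro exI[of _ "max 1 (2*R^2)"] conjI allI)
    fix n show "norm (pochhammer a n / fact n) ^ 2 \<le> max 1 (2*R^2) / (real n + 1)"
    proof (cases "n = 0")
      case True thus ?thesis by simp
    next
      case False
      hence "norm (pochhammer a n / fact n) ^ 2 \<le> 2 * R^2 / (real n + 1)" using b by simp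
      also have "\<dots> \<le> max 1 (2*R^2) / (real n + 1)" by (simp add: divide_right_mono)
      finally show ?thesis .
    qed
  qed simp
qed

definition cf :: "complex \<Rightarrow> nat \<Rightarrow> complex" where
  "cf a n = pochhammer a n * pochhammer a n / (pochhammer 1 n * of_nat (fact n))"

lemma cf_eq: "cf a n = (pochhammer a n / fact n)^2"
  unfolding cf_def pochhammer_fact[symmetric] by (simp add: power2_eq_square)

lemma hyp_cf: "hyp2F1 a a 1 x = (\<Sum>n. cf a n * x^n)"
  unfolding hyp2F1_def cf_def ..

lemma cf_Suc: "cf a (Suc n) = cf a n * (a + of_nat n)^2 / (of_nat n + 1)^2"
  unfolding cf_eq by (simp add: pochhammer_rec' power2_eq_square field_simps)

lemma cf_bound:
  assumes "Re a = 1/2"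
  shows "\<exists>K>0. \<forall>n. norm (cf a n) \<le> K / (real n + 1)"
  using poch_bound[OF assms] by (simp add: cf_eq norm_power)

lemma cf_summable:
  assumes "Re a = 1/2" "norm x < 1"
  shows "summable (\<lambda>n. norm (cf a n * x^n))"
proof -
  obtain K where K: "K > 0" "\<And>n. norm (cf a n) \<le> K / (real n + 1)" using cf_bound[OF assms(1)] by blast
  have bnd: "norm (cf a n * x^n) \<le> K * norm x ^ n" for n
  proof -
    have "K / (real n + 1) \<le> K / 1" by (rule divide_left_mono) (use K(1) in auto)
    hence c: "norm (cf a n) \<le> K" using K(2)[of n] by linarith
    have "norm (cf a n * x^n) = norm (cf a n) * norm x ^ n" by (simp add: norm_mult norm_power)
    also have "\<dots> \<le> K * norm x ^ n" by (rule mult_right_mono[OF c]) simp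
    finally show ?thesis .
  qed
  have sg: "summable (\<lambda>n. K * norm x ^ n)" using assms(2) by (intro summable_mult summable_geometric) simp
  show ?thesis by (rule summable_comparison_test'[OF sg, where N=0]) (use bnd in simp)
qed

lemma partial_abel:
  fixes c :: "nat \<Rightarrow> complex" and x :: real
  shows "(\<Sum>k<N. c k * of_real x ^ k) = (\<Sum>k<N. c k) * of_real x ^ N
           + (\<Sum>k<N. (\<Sum>j<Suc k. c j) * (of_real x ^ k - of_real x ^ Suc k))"
  by (induction N) (simp_all add: algebra_simps)

lemma tele: "(\<Sum>k<N. ((x::real) ^ k - x ^ Suc k)) = 1 - x ^ N"
  by (induction N) simp_all

lemma abel_bound:
  fixes c :: "nat \<Rightarrow> complex" and x :: real
  assumes "0 \<le> x" "x < 1" "summable (\<lambda>n. c n * of_real x ^ n)"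
    and B: "\<And>N. norm (\<Sum>k<N. c k) \<le> B"
  shows "norm (\<Sum>n. c n * of_real x ^ n) \<le> B"
proof -
  have p: "norm (\<Sum>k<N. c k * of_real x ^ k) \<le> B" for N
  proof -
    have "norm (\<Sum>k<N. c k * of_real x ^ k) \<le> norm ((\<Sum>k<N. c k) * of_real x ^ N)
           + norm (\<Sum>k<N. (\<Sum>j<Suc k. c j) * (of_real x ^ k - of_real x ^ Suc k))"
      unfolding partial_abel by (rule norm_triangle_ineq)
    also have "norm ((\<Sum>k<N. c k) * of_real x ^ N) \<le> B * x ^ N"
      using assms by (simp add: norm_mult norm_power mult_right_mono B)
    also have "norm (\<Sum>k<N. (\<Sum>j<Suc k. c j) * (of_real x ^ k - of_real x ^ Suc k))
       \<le> (\<Sum>k<N. norm ((\<Sum>j<Suc k. c j) * (of_real x ^ k - of_real x ^ Suc k)))"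
      by (rule norm_sum)
    also have "\<dots> \<le> (\<Sum>k<N. B * (x ^ k - x ^ Suc k))"
    proof (rule sum_mono)
      fix k
      have "x ^ Suc k \<le> x ^ k" using assms by (simp add: mult_left_le_one_le)
      hence "norm ((of_real x ^ k - of_real x ^ Suc k) :: complex) = x ^ k - x ^ Suc k"
        by (metis abs_of_nonneg diff_ge_0_iff_ge norm_of_real of_real_diff of_real_power)
      thus "norm ((\<Sum>j<Suc k. c j) * (of_real x ^ k - of_real x ^ Suc k)) \<le> B * (x ^ k - x ^ Suc k)"
        using B[of "Suc k"] \<open>x ^ Suc k \<le> x ^ k\<close> by (simp add: norm_mult mult_right_mono)
    qed
    also have "\<dots> = B * (1 - x ^ N)" using tele[of x N] by (simp add: sum_distrib_left[symmetric] del: power_Suc)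
    finally show ?thesis by (simp add: algebra_simps)
  qed
  have "(\<lambda>N. norm (\<Sum>k<N. c k * of_real x ^ k)) \<longlonglongrightarrow> norm (\<Sum>n. c n * of_real x ^ n)"
    by (intro tendsto_norm summable_LIMSEQ assms)
  thus ?thesis by (rule LIMSEQ_le_const2) (use p in auto)
qed


lemma stepid0:
  fixes a c p b :: complex
  assumes "p \<noteq> 0" "b \<noteq> 0" "b = 2*a-1"
  shows "p * (c * (a + (p - 1))^2 / p^2) / b - (p - 1) * c / b
     = c + c * (a^2 - b) / (b * p)"
proof -
  have "p * (c * (a + (p - 1))^2 / p^2) / b - (p - 1) * c / b = c * ((a + (p - 1))^2 - p * (p - 1)) / (b * p)"
    using assms(1,2) by (simp add: field_simps power2_eq_square)
  also have "(a + (p - 1))^2 - p * (p - 1) = b * p + (a^2 - b)"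
    unfolding assms(3) by (simp add: algebra_simps power2_eq_square)
  also have "c * (b * p + (a^2 - b)) / (b * p) = c + c * (a^2 - b) / (b * p)"
    using assms(1,2) by (simp add: field_simps)
  finally show ?thesis .
qed
lemma inv_sq_sum: "(\<Sum>k<N. 1 / (real k + 1)^2) \<le> 2 - 2 / (real N + 1)"
proof (induction N)
  case (Suc N)
  have "2 / (real N + 1) - 2 / (real N + 2) = 2 / ((real N + 1) * (real N + 2))" by (simp add: field_simps)
  moreover have "1 / (real N + 1)^2 \<le> 2 / ((real N + 1) * (real N + 2))"
    unfolding power2_eq_square by (simp add: divide_simps) 
  ultimately have "1 / (real N + 1)^2 \<le> 2 / (real N + 1) - 2 / (real N + 2)" by simp
  thus ?case using Suc by (simp add: add_ac)
qed simp

lemma partial_bounded: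
  assumes "Re a = 1/2" "a \<noteq> 1/2"
  shows "\<exists>B. \<forall>N. norm (\<Sum>k<N. cf a k) \<le> B"
proof -
  obtain K where K: "K > 0" "\<And>n. norm (cf a n) \<le> K / (real n + 1)" using cf_bound[OF assms(1)] by blast
  define \<beta> where "\<beta> = 2 * a - 1"
  have b0: "\<beta> \<noteq> 0" using assms(2) unfolding \<beta>_def by (auto simp: algebra_simps)
  define d where "d n = of_nat n * cf a n / \<beta>" for n
  define e where "e n = cf a n * (a^2 - \<beta>) / (\<beta> * (of_nat n + 1))" for n
  have step: "d (Suc n) - d n = cf a n + e n" for n
    using stepid0[of "of_nat n + 1" \<beta> a "cf a n"] b0
      of_nat_eq_0_iff[where 'a=complex, of "Suc n"] of_nat_Suc[where 'a=complex, of n] unfolding d_def e_def cf_Suc \<beta>_def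
    by (simp add: add.commute)
  have tel: "(\<Sum>k<N. cf a k) = d N - (\<Sum>k<N. e k)" for N
  proof (induction N)
    case 0 show ?case by (simp add: d_def)
  next
    case (Suc N) then show ?case using step[of N] by (simp add: algebra_simps)
  qed
  define E where "E = K * norm (a^2 - \<beta>) / norm \<beta>"
  have E0: "E \<ge> 0" using K by (simp add: E_def)
  have en: "norm (e k) \<le> E * (1 / (real k + 1)^2)" for k
  proof -
    have "norm (e k) = norm (cf a k) * norm (a^2 - \<beta>) / (norm \<beta> * (real k + 1))"
      unfolding e_def by (simp add: norm_mult norm_divide)
         (metis norm_of_nat of_nat_Suc add.commute)
    also have "\<dots> \<le> K / (real k + 1) * norm (a^2 - \<beta>) / (norm \<beta> * (real k + 1))"
      by (intro divide_right_mono mult_right_mono K(2)) auto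
    also have "\<dots> = E * (1 / (real k + 1)^2)" by (simp add: E_def power2_eq_square field_simps)
    finally show ?thesis .
  qed
  have dn: "norm (d N) \<le> K / norm \<beta>" for N
  proof -
    have "norm (d N) = real N * norm (cf a N) / norm \<beta>" by (simp add: d_def norm_mult norm_divide)
    also have "\<dots> \<le> real N * (K / (real N + 1)) / norm \<beta>"
      by (intro divide_right_mono mult_left_mono K(2)) auto
    also have "\<dots> \<le> K / norm \<beta>"
      using K(1) b0 by (intro divide_right_mono) (auto simp: field_simps)
    finally show ?thesis .
  qed
  show ?thesis
  proof (intro exI allI)
    fix N
    have "norm (\<Sum>k<N. cf a k) \<le> norm (d N) + norm (\<Sum>k<N. e k)" unfolding tel by (rule norm_triangle_ineq4)
    also have "norm (\<Sum>k<N. e k) \<le> (\<Sum>k<N. norm (e k))" by (rule norm_sum)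
    also have "\<dots> \<le> (\<Sum>k<N. E * (1 / (real k + 1)^2))" by (rule sum_mono) (rule en)
    also have "\<dots> \<le> E * 2"
    proof -
      have "0 \<le> 2 / (real N + 1)" by simp
      hence s2: "(\<Sum>k<N. 1 / (real k + 1)^2) \<le> 2" using inv_sq_sum[of N] by linarith
      show ?thesis unfolding sum_distrib_left[symmetric] by (rule mult_left_mono[OF s2 E0])
    qed
    finally show "norm (\<Sum>k<N. cf a k) \<le> K / norm \<beta> + E * 2" using dn[of N] by linarith
  qed
qed

lemma hyp_bounded:
  assumes "Re a = 1/2" "a \<noteq> 1/2"
  shows "\<exists>B. \<forall>x::real. 0 \<le> x \<longrightarrow> x < 1 \<longrightarrow> norm (hyp2F1 a a 1 (of_real x)) \<le> B"
proof -
  obtain B where B: "\<And>N. norm (\<Sum>k<N. cf a k) \<le> B" using partial_bounded[OF assms] by blast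
  show ?thesis
  proof (intro exI allI impI)
    fix x :: real assume x: "0 \<le> x" "x < 1"
    have "summable (\<lambda>n. cf a n * of_real x ^ n)"
      by (rule summable_norm_cancel, rule cf_summable) (use assms x in auto)
    thus "norm (hyp2F1 a a 1 (of_real x)) \<le> B" unfolding hyp_cf
      by (rule abel_bound[OF x]) (rule B)
  qed
qed

lemma hyp_log:
  assumes "Re a = 1/2"
  shows "\<exists>K>0. \<forall>x::real. 0 \<le> x \<longrightarrow> x < 1 \<longrightarrow> norm (hyp2F1 a a 1 (of_real x)) \<le> K * (1 - ln (1 - x))"
proof -
  obtain K where K: "K > 0" "\<And>n. norm (cf a n) \<le> K / (real n + 1)" using cf_bound[OF assms(1)] by blast
  show ?thesis
  proof (intro exI conjI allI impI)
    fix x :: real assume x: "0 \<le> x" "x < 1"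
    have sm: "summable (\<lambda>n. norm (cf a n * of_real x ^ n))"
      by (rule cf_summable) (use assms x in auto)
    have ls: "(\<lambda>n. x ^ n / real n) sums (- ln (1 - x))"
      using sums_minus[OF ln_series'[of "-x"]] x by simp
    have g: "(\<lambda>n. K * (x ^ n / real n + (if n = 0 then 1 else 0))) sums (K * (1 - ln (1 - x)))"
      using sums_mult[OF sums_add[OF ls sums_single[of 0 "\<lambda>_. 1"]], of K] by simp
    have "norm (hyp2F1 a a 1 (of_real x)) \<le> (\<Sum>n. norm (cf a n * of_real x ^ n))"
      unfolding hyp_cf by (rule summable_norm[OF sm])
    also have "\<dots> \<le> K * (1 - ln (1 - x))"
    proof (rule sums_le[OF _ summable_sums[OF sm] g])
      fix n
      have "norm (cf a n * of_real x ^ n) = norm (cf a n) * x ^ n"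
        using x by (simp add: norm_mult norm_power)
      also have "\<dots> \<le> K / (real n + 1) * x ^ n"
        by (rule mult_right_mono[OF K(2)]) (use x in simp)
      also have "\<dots> \<le> K * (x ^ n / real n + (if n = 0 then 1 else 0))"
      proof (cases "n = 0")
        case False
        hence "x ^ n / (real n + 1) \<le> x ^ n / real n" using x by (intro divide_left_mono) auto
        hence "K * (x ^ n / (real n + 1)) \<le> K * (x ^ n / real n)" using K(1) by (intro mult_left_mono) auto
        thus ?thesis using False by simp
      qed simp
      finally show "norm (cf a n * of_real x ^ n) \<le> K * (x ^ n / real n + (if n = 0 then 1 else 0))" .
    qed
    finally show "norm (hyp2F1 a a 1 (of_real x)) \<le> K * (1 - ln (1 - x))" .
  qed (use K in auto)
qed


lemma int_bound:
  fixes z P :: real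
  assumes "z \<ge> 1" "P \<ge> 0"
  shows "(\<integral>\<^sup>+ y \<in> {0..z - 1}. ennreal (P / sqrt ((z + 1) * (z + 1 - y))) \<partial>lborel) \<le> ennreal (2 * P)"
proof -
  define G where "G y = - 2 * P * sqrt (z + 1 - y) / sqrt (z + 1)" for y
  have d: "(G has_real_derivative P / sqrt ((z + 1) * (z + 1 - y))) (at y)" if "y \<in> {0..z-1}" for y
  proof -
    have y: "z + 1 - y > 0" using that by auto
    have h1: "((\<lambda>y. z + 1 - y) has_real_derivative (0 - 1)) (at y)"
      by (auto intro!: derivative_eq_intros)
    have h2: "((\<lambda>y. sqrt (z + 1 - y)) has_real_derivative (inverse (sqrt (z + 1 - y)) / 2 * (0 - 1))) (at y)"
      by (rule DERIV_chain2[OF DERIV_real_sqrt[OF y] h1])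
    have "(G has_real_derivative (- 2 * P * (inverse (sqrt (z + 1 - y)) / 2 * (0 - 1)) / sqrt (z + 1))) (at y)"
      unfolding G_def by (intro DERIV_cdivide DERIV_cmult h2)
    moreover have "- 2 * P * (inverse (sqrt (z + 1 - y)) / 2 * (0 - 1)) / sqrt (z + 1) = P / (sqrt (z + 1) * sqrt (z + 1 - y))"
      by (simp add: field_simps)
    moreover have "sqrt ((z + 1) * (z + 1 - y)) = sqrt (z + 1) * sqrt (z + 1 - y)" by (rule real_sqrt_mult)
    ultimately show ?thesis by simp
  qed
  have hi: "((\<lambda>y. P / sqrt ((z + 1) * (z + 1 - y))) has_integral (G (z - 1) - G 0)) {0..z-1}"
    using assms(1) d
    by (intro fundamental_theorem_of_calculus) (auto simp: has_real_derivative_iff_has_vector_derivative[symmetric]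
        intro: has_field_derivative_at_within)
  have "(\<integral>\<^sup>+ y \<in> {0..z - 1}. ennreal (P / sqrt ((z + 1) * (z + 1 - y))) \<partial>lborel) = ennreal (G (z - 1) - G 0)"
    by (rule nn_integral_has_integral_lebesgue'[OF _ hi]) (use assms in auto)
  also have "G (z - 1) - G 0 \<le> 2 * P"
  proof -
    have "G (z - 1) - G 0 = 2 * P - 2 * P * sqrt 2 / sqrt (z + 1)"
      unfolding G_def using assms by (simp add: field_simps)
    moreover have "2 * P * sqrt 2 / sqrt (z + 1) \<ge> 0" using assms by simp
    ultimately show ?thesis by linarith
  qed
  hence "ennreal (G (z - 1) - G 0) \<le> ennreal (2 * P)" by (rule ennreal_leI)
  finally show ?thesis .
qed


lemma Fbound:
  fixes M :: real
  assumes "M \<ge> 0"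
  shows "\<exists>A\<ge>0. \<forall>z x. z \<ge> 1 \<longrightarrow> 0 \<le> x \<longrightarrow> x \<le> 1 - 1/z \<longrightarrow>
     norm (hyp2F1 (1/2 + \<i> * complex_of_real M) (1/2 + \<i> * complex_of_real M) 1 (complex_of_real x))
       \<le> A * (1 + ln z) powr (1 - sgn M)"
proof (cases "M = 0")
  case True
  obtain K where K: "K > 0" "\<And>x::real. 0 \<le> x \<Longrightarrow> x < 1 \<Longrightarrow>
     norm (hyp2F1 (1/2) (1/2) 1 (of_real x)) \<le> K * (1 - ln (1 - x))"
    using hyp_log[of "1/2"] by auto
  show ?thesis
  proof (intro exI[of _ K] conjI allI impI)
    fix z x :: real assume zx: "z \<ge> 1" "0 \<le> x" "x \<le> 1 - 1/z"
    have z0: "1/z > 0" using zx by simp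
    have x1: "x < 1" using zx(3) z0 by linarith
    have "1 - x \<ge> 1/z" using zx by linarith
    moreover have "1 - x > 0" using x1 by simp
    ultimately have "ln (1/z) \<le> ln (1 - x)" using ln_le_cancel_iff[OF z0, of "1 - x"] by blast
    hence l: "- ln (1 - x) \<le> ln z" using zx by (simp add: ln_div)
    have "norm (hyp2F1 (1/2) (1/2) 1 (of_real x)) \<le> K * (1 + ln z)"
      using K(2)[OF zx(2) x1] mult_left_mono[OF l, of K] K(1) by (simp add: algebra_simps)
    moreover have "1 + ln z > 0" using ln_ge_zero[of z] zx by linarith
    ultimately show "norm (hyp2F1 (1/2 + \<i> * complex_of_real M) (1/2 + \<i> * complex_of_real M) 1 (complex_of_real x))
       \<le> K * (1 + ln z) powr (1 - sgn M)" using True by simp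
  qed (use K in simp)
next
  case False
  let ?a = "1/2 + \<i> * complex_of_real M"
  have "?a \<noteq> 1/2" using False by (simp add: complex_eq_iff)
  then obtain B where B: "\<And>x::real. 0 \<le> x \<Longrightarrow> x < 1 \<Longrightarrow> norm (hyp2F1 ?a ?a 1 (of_real x)) \<le> B"
    using hyp_bounded[of ?a] by auto
  have sg: "sgn M = 1" using False assms by simp
  show ?thesis
  proof (intro exI[of _ "max 0 B"] conjI allI impI)
    fix z x :: real assume zx: "z \<ge> 1" "0 \<le> x" "x \<le> 1 - 1/z"
    have z0: "1/z > 0" using zx by simp
    have x1: "x < 1" using zx(3) z0 by linarith
    have "1 + ln z > 0" using ln_ge_zero[of z] zx by linarith
    thus "norm (hyp2F1 ?a ?a 1 (complex_of_real x)) \<le> max 0 B * (1 + ln z) powr (1 - sgn M)"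
      using B[OF zx(2) x1] sg by simp
  qed simp
qed

theorem lemma3p2:
  fixes l m\<^sub>c :: real
  assumes "l > 1" and "m\<^sub>c \<ge> 0" and "4 * m\<^sub>c ^ 2 \<ge> (3 * l - 1) ^ 2"
  defines "M \<equiv> sqrt (4 * m\<^sub>c ^ 2 - (1 - 3 * l) ^ 2) / (2 * (l - 1))"
  shows "\<exists>C::real. \<forall>z::real. z \<ge> 1 \<longrightarrow>
    (\<integral>\<^sup>+ y \<in> {0..z - 1}.
        ennreal (cmod (complex_of_real (((1 + z) ^ 2 - y ^ 2) powr (-1/2)) *
          hyp2F1 (1/2 + \<i> * complex_of_real M) (1/2 + \<i> * complex_of_real M) 1
            (complex_of_real (((z - 1) ^ 2 - y ^ 2) / ((z + 1) ^ 2 - y ^ 2))))) \<partial>lborel)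
    \<le> ennreal (C * (1 + ln z) powr (1 - sgn M))"
proof -
  have "(1 - 3 * l)^2 = (3 * l - 1)^2" by (simp add: power2_commute)
  hence M0: "M \<ge> 0" unfolding M_def using assms(1,3) by (intro divide_nonneg_nonneg) auto
  obtain A where A: "A \<ge> 0" "\<And>z x. z \<ge> 1 \<Longrightarrow> 0 \<le> x \<Longrightarrow> x \<le> 1 - 1/z \<Longrightarrow>
     norm (hyp2F1 (1/2 + \<i> * complex_of_real M) (1/2 + \<i> * complex_of_real M) 1 (complex_of_real x))
       \<le> A * (1 + ln z) powr (1 - sgn M)"
    using Fbound[OF M0] by blast
  show ?thesis
  proof (intro exI[of _ "2 * A"] allI impI)
    fix z :: real assume z: "z \<ge> 1"
    define P where "P = A * (1 + ln z) powr (1 - sgn M)"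
    have P0: "P \<ge> 0" unfolding P_def using A(1) by simp
    have pt: "ennreal (cmod (complex_of_real (((1 + z) ^ 2 - y ^ 2) powr (-1/2)) *
          hyp2F1 (1/2 + \<i> * complex_of_real M) (1/2 + \<i> * complex_of_real M) 1
            (complex_of_real (((z - 1) ^ 2 - y ^ 2) / ((z + 1) ^ 2 - y ^ 2))))) * indicator {0..z-1} y
        \<le> ennreal (P / sqrt ((z + 1) * (z + 1 - y))) * indicator {0..z-1} y" for y
    proof (cases "y \<in> {0..z-1}")
      case True
      hence y: "0 \<le> y" "y \<le> z - 1" by auto
      define w where "w = (z + 1)^2 - y^2"
      have "y * y \<le> y * (z + 1)" by (rule mult_left_mono) (use y in auto)
      hence wge: "w \<ge> (z + 1) * (z + 1 - y)" unfolding w_def by (simp add: power2_eq_square algebra_simps)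
      have pos: "(z + 1) * (z + 1 - y) > 0" using y z by simp
      have yy: "y^2 \<le> (z-1)^2" using y by (intro power_mono) auto
      have zz: "(z+1)^2 \<le> (2*z)^2" using z by (intro power_mono) auto
      have "(0::real) \<le> y^2" "(2*z)^2 = 4 * z^2" by (simp_all add: power_mult_distrib)
      hence wle: "w \<le> 4 * z^2" unfolding w_def using zz by linarith
      define x where "x = ((z - 1) ^ 2 - y ^ 2) / ((z + 1) ^ 2 - y ^ 2)"
      have x0: "0 \<le> x" unfolding x_def using yy wge pos unfolding w_def
        by (intro divide_nonneg_nonneg) auto
      have wpos: "w > 0" using pos wge by linarith
      have "(z - 1)^2 - y^2 = w - 4 * z" unfolding w_def by (simp add: power2_eq_square algebra_simps)
      hence "x = (w - 4 * z) / w" unfolding x_def w_def by simp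
      hence x_alt: "x = 1 - 4 * z / w" using wpos by (simp add: diff_divide_distrib)
      have "1 / z = 4 * z / (4 * z^2)" using z by (simp add: power2_eq_square)
      also have "\<dots> \<le> 4 * z / w" using wle wpos z by (intro divide_left_mono) auto
      finally have "4 * z / w \<ge> 1 / z" .
      hence x1: "x \<le> 1 - 1/z" using x_alt by linarith
      have F: "norm (hyp2F1 (1/2 + \<i> * complex_of_real M) (1/2 + \<i> * complex_of_real M) 1 (complex_of_real x)) \<le> P"
        unfolding P_def by (rule A(2)[OF z x0 x1])
      have "w powr (-1/2) = w powr (-(1/2))" by simp
      also have "\<dots> = 1 / w powr (1/2)" by (rule powr_minus_divide)
      also have "\<dots> = 1 / sqrt w" using wpos by (simp add: powr_half_sqrt)
      finally have pw: "w powr (-1/2) = 1 / sqrt w" .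
      have "1 / sqrt w \<le> 1 / sqrt ((z + 1) * (z + 1 - y))"
        using pos wge by (intro divide_left_mono real_sqrt_le_mono) auto
      have "cmod (complex_of_real (((1 + z) ^ 2 - y ^ 2) powr (-1/2)) *
          hyp2F1 (1/2 + \<i> * complex_of_real M) (1/2 + \<i> * complex_of_real M) 1 (complex_of_real x))
          = (1 / sqrt w) * cmod (hyp2F1 (1/2 + \<i> * complex_of_real M) (1/2 + \<i> * complex_of_real M) 1 (complex_of_real x))"
      proof -
        have wz: "(1 + z)^2 - y^2 = w" unfolding w_def by (simp add: add.commute)
        show ?thesis unfolding wz pw using wpos by (simp add: norm_mult norm_divide)
      qed
      also have "\<dots> \<le> (1 / sqrt w) * P" by (rule mult_left_mono[OF F]) (use wpos in simp)
      also have "\<dots> \<le> (1 / sqrt ((z + 1) * (z + 1 - y))) * P"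
        by (rule mult_right_mono[OF \<open>1 / sqrt w \<le> _\<close> P0])
      finally show ?thesis using True by (simp add: x_def ennreal_leI)
    qed simp
    have "(\<integral>\<^sup>+ y \<in> {0..z - 1}.
        ennreal (cmod (complex_of_real (((1 + z) ^ 2 - y ^ 2) powr (-1/2)) *
          hyp2F1 (1/2 + \<i> * complex_of_real M) (1/2 + \<i> * complex_of_real M) 1
            (complex_of_real (((z - 1) ^ 2 - y ^ 2) / ((z + 1) ^ 2 - y ^ 2))))) \<partial>lborel)
       \<le> (\<integral>\<^sup>+ y \<in> {0..z - 1}. ennreal (P / sqrt ((z + 1) * (z + 1 - y))) \<partial>lborel)"
      by (rule nn_integral_mono) (rule pt)
    also have "\<dots> \<le> ennreal (2 * P)" by (rule int_bound[OF z P0])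
    finally show "(\<integral>\<^sup>+ y \<in> {0..z - 1}.
        ennreal (cmod (complex_of_real (((1 + z) ^ 2 - y ^ 2) powr (-1/2)) *
          hyp2F1 (1/2 + \<i> * complex_of_real M) (1/2 + \<i> * complex_of_real M) 1
            (complex_of_real (((z - 1) ^ 2 - y ^ 2) / ((z + 1) ^ 2 - y ^ 2))))) \<partial>lborel)
       \<le> ennreal (2 * A * (1 + ln z) powr (1 - sgn M))" by (simp add: P_def mult.assoc)
  qed
qed

end
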